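(* Let $A\in M_{n}(\mathbb{R})$ be a non-singular $n\times n$ matrix that is properly arranged. Then $A$ is diagonally eliminable.
   Context: Gauss-Jordan procedure: for $A\in M_{m,n}(\mathbb{R})$ set $A^{(0)}=A$. For $k\geq 0$, if $A^{(2k)}=[a^{(2k)}_{ij}]$ is defined and $a^{(2k)}_{k+1,k+1}\neq 0$, let $\mathcal{G}_{2k+1}$ be the $m\times m$ diagonal matrix with all diagonal entries $1$ except the $(k+1,k+1)$ entry, which is $1/a^{(2k)}_{k+1,k+1}$, and set $A^{(2k+1)}=\mathcal{G}_{2k+1}A^{(2k)}=[a^{(2k+1)}_{ij}]$; then let $\mathcal{G}_{2k+2}=[g_{ij}]_{m\times m}$ with $g_{ii}=1$, $g_{i,k+1}=-a^{(2k+1)}_{i,k+1}$ for $i\neq k+1$, and all other entries $0$, and set $A^{(2k+2)}=\mathcal{G}_{2k+2}A^{(2k+1)}$. A matrix $A\in M_{m,n}(\mathbb{R})$ of rank $r\geq 1$ is diagonally eliminable up to $r$ if for each $k=1,\dots,r$ the matrix $A^{(2k-2)}$ is defined and $a^{(2k-2)}_{kk}\neq 0$; it is diagonally eliminable if moreover $r=m\leq n$. Minors: $m^{i_1\dots i_p}_{j_1\dots j_p}$ (increasing indices) is the determinant of the submatrix of $A$ with rows $i_1,\dots,i_p$ and columns $j_1,\dots,j_p$; $m_k=m^{1\dots k}_{1\dots k}$. $A$ (of rank $\geq 1$) is properly arranged if $|a_{ij}|\leq|a_{11}|$ for all $i,j$, and for every integer $k$ with $1\leq k<\min\{m,n\}$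 one has $|m^{1\dots k\,i}_{1\dots k\,j}|\leq|m_{k+1}|$ for all $k+1\leq i\leq m$, $k+1\leq j\leq n$. *)

theory Defs
  imports "Jordan_Normal_Form.DL_Rank_Submatrix"
begin

(* Matrices are Jordan_Normal_Form matrices; indices are 0-based, so the
   paper's row/column index k+1 corresponds to index k here. *)

definition mat_rank :: "real mat \<Rightarrow> nat" where
  "mat_rank A = vec_space.rank (dim_row A) A"

definition minor :: "real mat \<Rightarrow> nat set \<Rightarrow> nat set \<Rightarrow> real" where
  "minor A I J = det (submatrix A I J)"

definition lead_minor :: "real mat \<Rightarrow> nat \<Rightarrow> real" where
  "lead_minor A k = minor A {0..<k} {0..<k}"

definition gj_G_odd :: "real mat \<Rightarrow> nat \<Rightarrow> real mat" where
  "gj_G_odd B k = mat (dim_row B) (dim_row B)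
     (\<lambda>(i,j). if i = j then (if i = k then 1 / B $$ (k,k) else 1) else 0)"

definition gj_G_even :: "real mat \<Rightarrow> nat \<Rightarrow> real mat" where
  "gj_G_even C k = mat (dim_row C) (dim_row C)
     (\<lambda>(i,j). if i = j then 1 else if j = k then - (C $$ (i,k)) else 0)"

(* gj_even A k = A^(2k) if defined, None otherwise *)
fun gj_even :: "real mat \<Rightarrow> nat \<Rightarrow> real mat option" where
  "gj_even A 0 = Some A"
| "gj_even A (Suc k) =
     (case gj_even A k of
        None \<Rightarrow> None
      | Some B \<Rightarrow>
          (if k < dim_row B \<and> k < dim_col B \<and> B $$ (k,k) \<noteq> 0
           then (let C = gj_G_odd B k * B in Some (gj_G_even C k * C))
           else None))"

(* diagonally eliminable up to r: for k = 1..r (paper), i.e. k = 0..r-1 here,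
   A^(2k) is defined and its (k,k) entry is nonzero *)
definition diag_elim_up_to :: "real mat \<Rightarrow> nat \<Rightarrow> bool" where
  "diag_elim_up_to A r \<longleftrightarrow>
     (\<forall>k < r. \<exists>B. gj_even A k = Some B \<and> k < dim_row B \<and> k < dim_col B \<and> B $$ (k,k) \<noteq> 0)"

definition diag_eliminable :: "real mat \<Rightarrow> bool" where
  "diag_eliminable A \<longleftrightarrow>
     mat_rank A \<ge> 1 \<and> diag_elim_up_to A (mat_rank A) \<and>
     mat_rank A = dim_row A \<and> dim_row A \<le> dim_col A"

definition properly_arranged :: "real mat \<Rightarrow> bool" where
  "properly_arranged A \<longleftrightarrow>
     mat_rank A \<ge> 1 \<and>
     (\<forall>i < dim_row A. \<forall>j < dim_col A. \<bar>A $$ (i,j)\<bar> \<le> \<bar>A $$ (0,0)\<bar>) \<and>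
     (\<forall>k. 1 \<le> k \<and> k < min (dim_row A) (dim_col A) \<longrightarrow>
        (\<forall>i j. k \<le> i \<and> i < dim_row A \<and> k \<le> j \<and> j < dim_col A \<longrightarrow>
           \<bar>minor A ({0..<k} \<union> {i}) ({0..<k} \<union> {j})\<bar> \<le> \<bar>lead_minor A (Suc k)\<bar>))"

end

theory Submission
  imports Defs
begin


lemma pick_init: "{0..<k} \<subseteq> I \<Longrightarrow> s < k \<Longrightarrow> pick I s = s"
proof (induction s)
  case 0
  then show ?case by (auto intro!: Least_equality)
next
  case (Suc s)
  then show ?case by (auto intro!: Least_equality)
qed

lemma pick_last: assumes "k \<le> i" shows "pick ({0..<k} \<union> {i}) k = i"
proof (cases k)
  case 0
  then show ?thesis by (auto intro!: Least_equality)
next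
  case (Suc k')
  have "pick ({0..<k} \<union> {i}) k' = k'" using pick_init[of k "{0..<k} \<union> {i}" k'] Suc by auto
  then show ?thesis using Suc assms by (auto intro!: Least_equality)
qed

lemma card_sub: "I \<subseteq> {0..<n} \<Longrightarrow> card {i. i < n \<and> i \<in> I} = card I"
  by (metis (no_types, lifting) Collect_cong atLeastLessThan_iff subset_eq Collect_mem_eq)

lemma det_multi_addrow:
  assumes M: "M \<in> carrier_mat m m" and t: "t < m" and R: "finite R" "t \<notin> R"
  shows "det (mat m m (\<lambda>(s,c). if s \<in> R then M $$ (s,c) + f s * M $$ (t,c) else M $$ (s,c))) = det M"
  using R
proof (induction R rule: finite_induct)
  case empty
  have "mat m m (\<lambda>(s,c). if s \<in> {} then M $$ (s,c) + f s * M $$ (t,c) else M $$ (s,c)) = M"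
    using M by (intro eq_matI) auto
  then show ?case by simp
next
  case (insert r R)
  let ?MR = "mat m m (\<lambda>(s,c). if s \<in> R then M $$ (s,c) + f s * M $$ (t,c) else M $$ (s,c))"
  have "mat m m (\<lambda>(s,c). if s \<in> insert r R then M $$ (s,c) + f s * M $$ (t,c) else M $$ (s,c))
     = addrow (f r) r t ?MR"
    using M insert t by (intro eq_matI) (auto simp: algebra_simps)
  moreover have "det (addrow (f r) r t ?MR) = det ?MR"
    by (rule det_addrow[OF t]) (use insert in auto)
  ultimately show ?case using insert by simp
qed


lemma mult_entry: "G \<in> carrier_mat n n \<Longrightarrow> B \<in> carrier_mat n n \<Longrightarrow> r < n \<Longrightarrow> c < n \<Longrightarrow>
   (G * B) $$ (r,c) = (\<Sum>j\<in>{0..<n}. G $$ (r,j) * B $$ (j,c))"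
  by (simp add: scalar_prod_def)

lemma G_odd_entry:
  assumes B: "B \<in> carrier_mat n n" and r: "r < n" and c: "c < n"
  shows "(gj_G_odd B k * B) $$ (r,c) = (if r = k then B $$ (k,c) / B $$ (k,k) else B $$ (r,c))"
proof -
  let ?x = "(if r = k then 1 / B $$ (k,k) else 1)"
  have "(gj_G_odd B k * B) $$ (r,c) = (\<Sum>j\<in>{0..<n}. gj_G_odd B k $$ (r,j) * B $$ (j,c))"
    by (rule mult_entry) (use B r c in \<open>auto simp: gj_G_odd_def\<close>)
  also have "\<dots> = (\<Sum>j\<in>{0..<n}. (if r = j then ?x * B $$ (j,c) else 0))"
    by (rule sum.cong) (use B r in \<open>auto simp: gj_G_odd_def\<close>)
  also have "\<dots> = ?x * B $$ (r,c)"
    using r by (simp add: sum.delta')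
  finally show ?thesis by auto
qed

lemma G_even_entry:
  assumes C: "C \<in> carrier_mat n n" and r: "r < n" and c: "c < n" and k: "k < n"
  shows "(gj_G_even C k * C) $$ (r,c) = (if r = k then C $$ (k,c) else C $$ (r,c) - C $$ (r,k) * C $$ (k,c))"
proof -
  let ?y = "if r \<noteq> k then - C $$ (r,k) * C $$ (k,c) else 0"
  have "(gj_G_even C k * C) $$ (r,c) = (\<Sum>j\<in>{0..<n}. gj_G_even C k $$ (r,j) * C $$ (j,c))"
    by (rule mult_entry) (use C r c in \<open>auto simp: gj_G_even_def\<close>)
  also have "\<dots> = (\<Sum>j\<in>{0..<n}. (if r = j then C $$ (r,c) else 0) + (if k = j then ?y else 0))"
    by (rule sum.cong) (use C r in \<open>auto simp: gj_G_even_def\<close>)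
  also have "\<dots> = C $$ (r,c) + ?y"
    using r k by (simp add: sum.distrib)
  finally show ?thesis by auto
qed


definition gj_inv :: "real mat \<Rightarrow> nat \<Rightarrow> nat \<Rightarrow> real mat \<Rightarrow> real \<Rightarrow> bool" where
  "gj_inv A n k B D \<longleftrightarrow> gj_even A k = Some B \<and> B \<in> carrier_mat n n \<and> D \<noteq> 0 \<and>
     (\<forall>r<n. \<forall>c<k. B $$ (r,c) = (if r = c then 1 else 0)) \<and>
     (\<forall>I J. {0..<k} \<subseteq> I \<longrightarrow> I \<subseteq> {0..<n} \<longrightarrow> J \<subseteq> {0..<n} \<longrightarrow> card I = card J \<longrightarrow>
        minor A I J = D * minor B I J)"

lemma gj_inv_0: "A \<in> carrier_mat n n \<Longrightarrow> gj_inv A n 0 A 1"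
  unfolding gj_inv_def by auto

lemma gj_inv_step:
  assumes inv: "gj_inv A n k B D" and k: "k < n" and p: "B $$ (k,k) \<noteq> 0"
  shows "\<exists>B'. gj_inv A n (Suc k) B' (D * B $$ (k,k))"
proof -
  let ?p = "B $$ (k,k)"
  have B: "B \<in> carrier_mat n n" and some: "gj_even A k = Some B" and D: "D \<noteq> 0"
    and col: "\<And>r c. r < n \<Longrightarrow> c < k \<Longrightarrow> B $$ (r,c) = (if r = c then 1 else 0)"
    and mi: "\<And>I J. {0..<k} \<subseteq> I \<Longrightarrow> I \<subseteq> {0..<n} \<Longrightarrow> J \<subseteq> {0..<n} \<Longrightarrow> card I = card J \<Longrightarrow>
        minor A I J = D * minor B I J"
    using inv unfolding gj_inv_def by auto
  define C where "C = gj_G_odd B k * B"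
  define B' where "B' = gj_G_even C k * C"
  have C: "C \<in> carrier_mat n n" using B unfolding C_def gj_G_odd_def by auto
  have B': "B' \<in> carrier_mat n n" using C unfolding B'_def gj_G_even_def by auto
  have Ce: "\<And>r c. r < n \<Longrightarrow> c < n \<Longrightarrow> C $$ (r,c) = (if r = k then B $$ (k,c) / ?p else B $$ (r,c))"
    unfolding C_def using G_odd_entry[OF B] by auto
  have B'e: "\<And>r c. r < n \<Longrightarrow> c < n \<Longrightarrow> B' $$ (r,c) = (if r = k then C $$ (k,c) else C $$ (r,c) - C $$ (r,k) * C $$ (k,c))"
    unfolding B'_def using G_even_entry[OF C _ _ k] by auto
  have some': "gj_even A (Suc k) = Some B'"
    using some B k p unfolding B'_def C_def by (simp add: Let_def)
  have col': "B' $$ (r,c) = (if r = c then 1 else 0)" if r: "r < n" and c: "c < Suc k" for r c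
  proof (cases "c < k")
    case True
    have "C $$ (k,c) = 0" using Ce[of k c] col[of k c] True k by auto
    then show ?thesis using B'e[of r c] Ce[of r c] col[of r c] True r k by auto
  next
    case False
    then have "c = k" using c by auto
    then show ?thesis using B'e[of r c] Ce[of k k] p r k by auto
  qed
  have mi': "minor A I J = (D * ?p) * minor B' I J"
    if I1: "{0..<Suc k} \<subseteq> I" and I2: "I \<subseteq> {0..<n}" and J: "J \<subseteq> {0..<n}" and cIJ: "card I = card J" for I J
  proof -
    define m where "m = card I"
    have cI: "card {i. i < n \<and> i \<in> I} = m" using card_sub[OF I2] m_def by simp
    have cJ: "card {i. i < n \<and> i \<in> J} = m" using card_sub[OF J] m_def cIJ by simp
    have fI: "finite I" using I2 finite_subset by blast
    have km: "k < m" unfolding m_def using card_mono[OF fI I1] by simp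
    have pk: "pick I k = k" using pick_init[OF I1] by simp
    have pI: "s < m \<Longrightarrow> pick I s < n" for s using pick_in_set[of s I] I2 m_def by auto
    have pJ: "s < m \<Longrightarrow> pick J s < n" for s using pick_in_set[of s J] J cIJ m_def by auto
    have pne: "s < m \<Longrightarrow> s \<noteq> k \<Longrightarrow> pick I s \<noteq> k" for s
      using pick_mono[of k I s] pick_mono[of s I k] km pk m_def
      by (metis linorder_neqE_nat nat_less_le)
    define S where "S = submatrix B I J"
    define T where "T = submatrix C I J"
    define U where "U = submatrix B' I J"
    have S: "S \<in> carrier_mat m m" unfolding S_def using B cI cJ by (auto simp: dim_submatrix)
    have Se: "s < m \<Longrightarrow> c < m \<Longrightarrow> S $$ (s,c) = B $$ (pick I s, pick J c)" for s c
      unfolding S_def using B cI cJ by (auto simp: submatrix_index)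
    have Te: "s < m \<Longrightarrow> c < m \<Longrightarrow> T $$ (s,c) = C $$ (pick I s, pick J c)" for s c
      unfolding T_def using C cI cJ by (auto simp: submatrix_index)
    have Ue: "s < m \<Longrightarrow> c < m \<Longrightarrow> U $$ (s,c) = B' $$ (pick I s, pick J c)" for s c
      unfolding U_def using B' cI cJ by (auto simp: submatrix_index)
    have T: "T = multrow k (1 / ?p) S"
    proof (rule eq_matI)
      fix s c assume s: "s < dim_row (multrow k (1 / ?p) S)" and c: "c < dim_col (multrow k (1 / ?p) S)"
      then have s: "s < m" and c: "c < m" using S by auto
      show "T $$ (s,c) = multrow k (1 / ?p) S $$ (s,c)"
        using Te[OF s c] Se[OF s c] Ce[OF pI[OF s] pJ[OF c]] s c S pne[OF s] pk by auto
    qed (use S C cI cJ in \<open>auto simp: T_def dim_submatrix\<close>)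
    have dT: "det T = (1 / ?p) * det S" unfolding T using det_multrow[OF km S] .
    define f where "f s = - C $$ (pick I s, k)" for s
    have U: "U = mat m m (\<lambda>(s,c). if s \<in> {0..<m} - {k} then T $$ (s,c) + f s * T $$ (k,c) else T $$ (s,c))"
    proof (rule eq_matI)
      fix s c assume "s < dim_row (mat m m (\<lambda>(s,c). if s \<in> {0..<m} - {k} then T $$ (s,c) + f s * T $$ (k,c) else T $$ (s,c)))"
        and "c < dim_col (mat m m (\<lambda>(s,c). if s \<in> {0..<m} - {k} then T $$ (s,c) + f s * T $$ (k,c) else T $$ (s,c)))"
      then have s: "s < m" and c: "c < m" by auto
      show "U $$ (s,c) = mat m m (\<lambda>(s,c). if s \<in> {0..<m} - {k} then T $$ (s,c) + f s * T $$ (k,c) else T $$ (s,c)) $$ (s,c)"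
        using Ue[OF s c] Te[OF s c] Te[OF km c] B'e[OF pI[OF s] pJ[OF c]] s c pne[OF s] pk
        by (auto simp: f_def)
    qed (use B' cI cJ in \<open>auto simp: U_def dim_submatrix\<close>)
    have TT: "T \<in> carrier_mat m m" using T S by auto
    have dU: "det U = det T" unfolding U by (rule det_multi_addrow[OF TT km]) auto
    have "{0..<k} \<subseteq> I" using I1 by auto
    then have "minor A I J = D * det S" using mi[of I J] I2 J cIJ by (simp add: minor_def S_def)
    also have "\<dots> = (D * ?p) * det U" using dU dT p by simp
    finally show ?thesis by (simp add: minor_def U_def)
  qed
  show ?thesis
    apply (rule exI[of _ B'])
    unfolding gj_inv_def using some' B' D p col' mi' by auto
qed


lemma minor_special:
  assumes B: "B \<in> carrier_mat n n" and i: "k \<le> i" "i < n" and j: "k \<le> j" "j < n"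
    and col: "\<And>r c. r < n \<Longrightarrow> c < k \<Longrightarrow> B $$ (r,c) = (if r = c then 1 else 0)"
  shows "minor B ({0..<k} \<union> {i}) ({0..<k} \<union> {j}) = B $$ (i,j)"
proof -
  let ?I = "{0..<k} \<union> {i}" and ?J = "{0..<k} \<union> {j}"
  have cI: "card {x. x < n \<and> x \<in> ?I} = Suc k" using card_sub[of ?I n] i by auto
  have cJ: "card {x. x < n \<and> x \<in> ?J} = Suc k" using card_sub[of ?J n] j by auto
  define S where "S = submatrix B ?I ?J"
  have S: "S \<in> carrier_mat (Suc k) (Suc k)" unfolding S_def using B cI cJ by (auto simp: dim_submatrix)
  have Se: "s < Suc k \<Longrightarrow> c < Suc k \<Longrightarrow> S $$ (s,c) = B $$ (pick ?I s, pick ?J c)" for s c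
    unfolding S_def using B cI cJ by (auto simp: submatrix_index)
  have pI: "pick ?I s = (if s < k then s else i)" if "s < Suc k" for s
    proof (cases "s < k")
    case True then show ?thesis using pick_init[of k ?I s] by auto
  next
    case False then have "s = k" using that by simp
    then show ?thesis using pick_last[OF i(1)] by simp
  qed
  have pJ: "pick ?J s = (if s < k then s else j)" if "s < Suc k" for s
    proof (cases "s < k")
    case True then show ?thesis using pick_init[of k ?J s] by auto
  next
    case False then have "s = k" using that by simp
    then show ?thesis using pick_last[OF j(1)] by simp
  qed
  have ut: "upper_triangular S"
    unfolding upper_triangular_def
  proof (intro allI impI)
    fix s c assume s: "s < dim_row S" and cs: "c < s"
    then have s': "s < Suc k" using S by auto
    then show "S $$ (s,c) = 0" using Se[OF s'] cs pI[OF s'] pJ[of c] col[of "pick ?I s" c] i j by auto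
  qed
  have "det S = (\<Prod>s = 0..<Suc k. S $$ (s,s))"
    using det_upper_triangular[OF ut S] S by (simp add: prod_list_diag_prod)
  also have "\<dots> = (\<Prod>s = 0..<k. S $$ (s,s)) * S $$ (k,k)" by simp
  also have "(\<Prod>s = 0..<k. S $$ (s,s)) = 1"
    by (rule prod.neutral) (use Se pI pJ col i in auto)
  also have "S $$ (k,k) = B $$ (i,j)" using Se[of k k] pI[of k] pJ[of k] by auto
  finally show ?thesis unfolding minor_def S_def by simp
qed

lemma submatrix_full: "A \<in> carrier_mat n n \<Longrightarrow> submatrix A {0..<n} {0..<n} = A"
  by (intro eq_matI) (auto simp: dim_submatrix submatrix_index pick_init[of n "{0..<n}"] card_sub)

lemma gj_nonzero:
  assumes A: "A \<in> carrier_mat n n" and dA: "det A \<noteq> 0" and pa: "properly_arranged A"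
    and inv: "gj_inv A n k B D" and k: "k < n"
  shows "B $$ (k,k) \<noteq> 0"
proof
  assume z: "B $$ (k,k) = 0"
  have B: "B \<in> carrier_mat n n" and some: "gj_even A k = Some B" and D: "D \<noteq> 0"
    and col: "\<And>r c. r < n \<Longrightarrow> c < k \<Longrightarrow> B $$ (r,c) = (if r = c then 1 else 0)"
    and mi: "\<And>I J. {0..<k} \<subseteq> I \<Longrightarrow> I \<subseteq> {0..<n} \<Longrightarrow> J \<subseteq> {0..<n} \<Longrightarrow> card I = card J \<Longrightarrow>
        minor A I J = D * minor B I J"
    using inv unfolding gj_inv_def by auto
  have row0: "B $$ (k,j) = 0" if j: "j < n" for j
  proof (cases "j < k")
    case True then show ?thesis using col[of k j] k by auto
  next
    case False
    then have kj: "k \<le> j" by simp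
    show ?thesis
    proof (cases "k = 0")
      case True
      then have "B = A" using some by simp
      then show ?thesis using pa z j k True A unfolding properly_arranged_def by fastforce
    next
      case False
      have mk: "minor A ({0..<k} \<union> {k}) ({0..<k} \<union> {j'}) = D * B $$ (k,j')" if "k \<le> j'" "j' < n" for j'
        using mi[of "{0..<k} \<union> {k}" "{0..<k} \<union> {j'}"] minor_special[OF B order_refl k that col] that k
        by auto
      have "lead_minor A (Suc k) = minor A ({0..<k} \<union> {k}) ({0..<k} \<union> {k})"
        unfolding lead_minor_def by (simp add: atLeastLessThanSuc Un_commute)
      also have "\<dots> = 0" using mk[of k] z k by simp
      finally have "lead_minor A (Suc k) = 0" .
      moreover have "\<bar>minor A ({0..<k} \<union> {k}) ({0..<k} \<union> {j}) \<bar> \<le> \<bar>lead_minor A (Suc k)\<bar>"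
        using pa False k kj j A unfolding properly_arranged_def by auto
      ultimately show ?thesis using mk[OF kj j] D by simp
    qed
  qed
  have "multrow k 0 B = B" using B row0 by (intro eq_matI) auto
  then have "det B = 0" using det_multrow[OF k B, of 0] by simp
  moreover have "det A = D * det B"
    using mi[of "{0..<n}" "{0..<n}"] k submatrix_full[OF A] submatrix_full[OF B]
    by (auto simp: minor_def)
  ultimately show False using dA by simp
qed

lemma gj_all: assumes A: "A \<in> carrier_mat n n" and dA: "det A \<noteq> 0" and pa: "properly_arranged A"
  shows "k \<le> n \<Longrightarrow> \<exists>B D. gj_inv A n k B D"
proof (induction k)
  case 0 then show ?case using gj_inv_0[OF A] by blast
next
  case (Suc k)
  then obtain B D where inv: "gj_inv A n k B D" by auto
  have "B $$ (k,k) \<noteq> 0" using gj_nonzero[OF A dA pa inv] Suc by auto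
  then show ?case using gj_inv_step[OF inv] Suc by auto
qed

theorem corollary2p12:
  fixes A :: "real mat" and n :: nat
  assumes "A \<in> carrier_mat n n"
    and "det A \<noteq> 0"
    and "properly_arranged A"
  shows "diag_eliminable A"
proof -
  have rk: "mat_rank A = n"
    using vec_space.det_rank_iff[OF assms(1)] assms(1,2) unfolding mat_rank_def by auto
  have "diag_elim_up_to A n"
    unfolding diag_elim_up_to_def
  proof (intro allI impI)
    fix k assume k: "k < n"
    obtain B D where inv: "gj_inv A n k B D" using gj_all[OF assms] k by fastforce
    have "B $$ (k,k) \<noteq> 0" using gj_nonzero[OF assms inv k] .
    then show "\<exists>B. gj_even A k = Some B \<and> k < dim_row B \<and> k < dim_col B \<and> B $$ (k, k) \<noteq> 0"
      using inv k unfolding gj_inv_def by auto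
  qed
  then show ?thesis using rk assms unfolding diag_eliminable_def properly_arranged_def by auto
qed

end
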